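(* Let $q\in\mathbb{C}^\times$ with $q^2\ne\pm1$, $n\ge2$, $\mathbf{Q}\in\mathbb{C}^{n-1}$. Then the algebra $U_q(\mathfrak{sl}_n^{\langle\mathbf{Q}\rangle}[x])$ is generated by the elements $X^{\pm}_{i,0}$, $J_{i,1}$, $K_i^{\pm}$ for $i\in\{1,\dots,n-1\}$.
   Context: Let $I=\{1,\dots,n-1\}$, $(a_{ij})$ the Cartan matrix of type $A_{n-1}$, $[k]=(q^k-q^{-k})/(q-q^{-1})$, $[x,y]=xy-yx$. For $\mathbf{Q}=(Q_1,\dots,Q_{n-1})$, $U_q(\mathfrak{sl}_n^{\langle\mathbf{Q}\rangle}[x])$ is the $\mathbb{C}$-algebra with generators $X^{\pm}_{i,t},J_{i,t},K_i^{\pm}$ ($i\in I,t\ge0$) and relations: all $K_i^+$, $J_{j,t}$ pairwise commute; $K_i^+K_i^-=1=K_i^-K_i^+$; $(K_i^-)^2=1-(q-q^{-1})J_{i,0}$; $X^{\pm}_{i,t+1}X^{\pm}_{j,s}-q^{\pm a_{ij}}X^{\pm}_{j,s}X^{\pm}_{i,t+1}=q^{\pm a_{ij}}X^{\pm}_{i,t}X^{\pm}_{j,s+1}-X^{\pm}_{j,s+1}X^{\pm}_{i,t}$; $K_i^+X^{\pm}_{j,t}K_i^-=q^{\pm a_{ij}}X^{\pm}_{j,t}$; $q^{\pm a_{ij}}J_{i,0}X^{\pm}_{j,t}-q^{\mp a_{ij}}X^{\pm}_{j,t}J_{i,0}=[\pm a_{ij}]X^{\pm}_{j,t}$; $[J_{i,s+1},X^{\pm}_{j,t}]=q^{\pm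 a_{ij}}J_{i,s}X^{\pm}_{j,t+1}-q^{\mp a_{ij}}X^{\pm}_{j,t+1}J_{i,s}$; $[X^+_{i,t},X^-_{j,s}]=\delta_{ij}K_i^+(J_{i,s+t}-Q_iJ_{i,s+t+1})$; $[X^\pm_{i,t},X^\pm_{j,s}]=0$ if $j\ne i,i\pm1$; $X^{\pm}_{i\pm1,u}(X^{\pm}_{i,s}X^{\pm}_{i,t}+X^{\pm}_{i,t}X^{\pm}_{i,s})+(X^{\pm}_{i,s}X^{\pm}_{i,t}+X^{\pm}_{i,t}X^{\pm}_{i,s})X^{\pm}_{i\pm1,u}=(q+q^{-1})(X^{\pm}_{i,s}X^{\pm}_{i\pm1,u}X^{\pm}_{i,t}+X^{\pm}_{i,t}X^{\pm}_{i\pm1,u}X^{\pm}_{i,s})$. *)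

theory Defs
  imports Complex_Main
begin

definition cartanA :: "nat \<Rightarrow> nat \<Rightarrow> int" where
  "cartanA i j = (if i = j then 2 else if i = j + 1 \<or> j = i + 1 then -1 else 0)"

definition qint :: "complex \<Rightarrow> int \<Rightarrow> complex" where
  "qint q k = (q powi k - q powi (-k)) / (q - inverse q)"

text \<open>A (unital, associative) complex algebra: a ring 'a together with a
  ring homomorphism sc from the complex numbers into the centre of 'a.\<close>
definition is_calg :: "(complex \<Rightarrow> 'a::ring_1) \<Rightarrow> bool" where
  "is_calg sc \<longleftrightarrow> sc 1 = 1 \<and> (\<forall>a b. sc (a + b) = sc a + sc b)
     \<and> (\<forall>a b. sc (a * b) = sc a * sc b) \<and> (\<forall>a x. sc a * x = x * sc a)"

inductive_set subalg :: "(complex \<Rightarrow> 'a::ring_1) \<Rightarrow> 'a set \<Rightarrow> 'a set"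
  for sc :: "complex \<Rightarrow> 'a" and S :: "'a set" where
  gen: "x \<in> S \<Longrightarrow> x \<in> subalg sc S"
| scal: "sc c \<in> subalg sc S"
| add: "x \<in> subalg sc S \<Longrightarrow> y \<in> subalg sc S \<Longrightarrow> x + y \<in> subalg sc S"
| mult: "x \<in> subalg sc S \<Longrightarrow> y \<in> subalg sc S \<Longrightarrow> x * y \<in> subalg sc S"

text \<open>Sign-dependent generators: e = True stands for +, e = False for -.\<close>
definition sgn_pm :: "bool \<Rightarrow> int" where
  "sgn_pm e = (if e then 1 else -1)"

definition Xpm :: "bool \<Rightarrow> (nat \<Rightarrow> nat \<Rightarrow> 'a) \<Rightarrow> (nat \<Rightarrow> nat \<Rightarrow> 'a) \<Rightarrow> nat \<Rightarrow> nat \<Rightarrow> 'a" where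
  "Xpm e Xp Xm = (if e then Xp else Xm)"

text \<open>The defining relations of U_q(sl_n^<Q>[x]), for elements
  Xp i t = X^+_{i,t}, Xm i t = X^-_{i,t}, J i t = J_{i,t}, Kp i = K_i^+, Km i = K_i^-
  of a complex algebra (indices i in {1..n-1}, t >= 0).\<close>
definition usl_rels ::
  "(complex \<Rightarrow> 'a::ring_1) \<Rightarrow> complex \<Rightarrow> nat \<Rightarrow> (nat \<Rightarrow> complex) \<Rightarrow>
   (nat \<Rightarrow> nat \<Rightarrow> 'a) \<Rightarrow> (nat \<Rightarrow> nat \<Rightarrow> 'a) \<Rightarrow> (nat \<Rightarrow> nat \<Rightarrow> 'a) \<Rightarrow>
   (nat \<Rightarrow> 'a) \<Rightarrow> (nat \<Rightarrow> 'a) \<Rightarrow> bool" where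
  "usl_rels sc q n Q Xp Xm J Kp Km \<longleftrightarrow>
   (let I = {1..n-1}; a = cartanA; X = (\<lambda>e. Xpm e Xp Xm) in
   (\<forall>i\<in>I. \<forall>j\<in>I. Kp i * Kp j = Kp j * Kp i) \<and>
   (\<forall>i\<in>I. \<forall>j\<in>I. \<forall>t. Kp i * J j t = J j t * Kp i) \<and>
   (\<forall>i\<in>I. \<forall>j\<in>I. \<forall>s t. J i s * J j t = J j t * J i s) \<and>
   (\<forall>i\<in>I. Kp i * Km i = 1 \<and> Km i * Kp i = 1) \<and>
   (\<forall>i\<in>I. (Km i)^2 = 1 - sc (q - inverse q) * J i 0) \<and>
   (\<forall>e. \<forall>i\<in>I. \<forall>j\<in>I. \<forall>t s.
      X e i (t+1) * X e j s - sc (q powi (sgn_pm e * a i j)) * X e j s * X e i (t+1)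
      = sc (q powi (sgn_pm e * a i j)) * X e i t * X e j (s+1) - X e j (s+1) * X e i t) \<and>
   (\<forall>e. \<forall>i\<in>I. \<forall>j\<in>I. \<forall>t.
      Kp i * X e j t * Km i = sc (q powi (sgn_pm e * a i j)) * X e j t) \<and>
   (\<forall>e. \<forall>i\<in>I. \<forall>j\<in>I. \<forall>t.
      sc (q powi (sgn_pm e * a i j)) * J i 0 * X e j t
        - sc (q powi (- sgn_pm e * a i j)) * X e j t * J i 0
      = sc (qint q (sgn_pm e * a i j)) * X e j t) \<and>
   (\<forall>e. \<forall>i\<in>I. \<forall>j\<in>I. \<forall>s t.
      J i (s+1) * X e j t - X e j t * J i (s+1)
      = sc (q powi (sgn_pm e * a i j)) * J i s * X e j (t+1)
        - sc (q powi (- sgn_pm e * a i j)) * X e j (t+1) * J i s) \<and>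
   (\<forall>i\<in>I. \<forall>j\<in>I. \<forall>t s.
      Xp i t * Xm j s - Xm j s * Xp i t
      = (if i = j then Kp i * (J i (s+t) - sc (Q i) * J i (s+t+1)) else 0)) \<and>
   (\<forall>e. \<forall>i\<in>I. \<forall>j\<in>I. \<forall>t s. j \<noteq> i \<and> j \<noteq> i + 1 \<and> j + 1 \<noteq> i \<longrightarrow>
      X e i t * X e j s - X e j s * X e i t = 0) \<and>
   (\<forall>e. \<forall>i\<in>I. \<forall>j\<in>I. \<forall>s t u. (j = i + 1 \<or> j + 1 = i) \<longrightarrow>
      X e j u * (X e i s * X e i t + X e i t * X e i s)
        + (X e i s * X e i t + X e i t * X e i s) * X e j u
      = sc (q + inverse q) * (X e i s * X e j u * X e i t + X e i t * X e j u * X e i s)))"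

end

theory Submission
  imports Defs
begin

lemma calg_facts:
  assumes "is_calg sc"
  shows "sc 1 = 1" "sc (a+b) = sc a + sc b" "sc (a*b) = sc a * sc b"
    "sc 0 = 0" "sc (-a) = - sc a"
proof -
  show 1: "sc 1 = 1" "sc (a+b) = sc a + sc b" "sc (a*b) = sc a * sc b"
    using assms unfolding is_calg_def by blast+
  have "sc (0+0) = sc 0 + sc 0" using assms unfolding is_calg_def by blast
  then show 0: "sc 0 = 0" by simp
  have "sc (-a + a) = sc (-a) + sc a" using assms unfolding is_calg_def by blast
  then show "sc (-a) = - sc a" using 0 by (simp add: eq_neg_iff_add_eq_0)
qed

lemma sc_comm:
  assumes "is_calg sc" shows "sc a * x = x * sc a"
  using assms unfolding is_calg_def by blast

lemma sub_smult:
  assumes "is_calg sc" "x \<in> subalg sc S"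
  shows "sc c * x \<in> subalg sc S"
  using assms by (simp add: subalg.mult subalg.scal)

lemma sub_diff:
  assumes "is_calg sc" "x \<in> subalg sc S" "y \<in> subalg sc S"
  shows "x - y \<in> subalg sc S"
proof -
  have "x - y = x + sc (-1) * y" using calg_facts[OF assms(1)] by simp
  moreover have "x + sc (-1) * y \<in> subalg sc S"
    by (rule subalg.add[OF assms(2) sub_smult[OF assms(1,3)]])
  ultimately show ?thesis by metis
qed

lemma sub_one:
  assumes "is_calg sc" shows "1 \<in> subalg sc S"
  using subalg.scal[of sc 1 S] calg_facts[OF assms] by simp

lemma sc_cancel:
  assumes "is_calg sc" "(c::complex) \<noteq> 0"
  shows "sc (inverse c) * (sc c * x) = x"
proof -
  have "sc (inverse c) * (sc c * x) = sc (inverse c * c) * x"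
    using calg_facts[OF assms(1)] by (simp add: mult.assoc)
  then show ?thesis using assms calg_facts[OF assms(1)] by simp
qed

lemma qint_nz:
  assumes "(q::complex) \<noteq> 0" "q^2 \<noteq> 1" "q^2 \<noteq> -1"
  shows "qint q (sgn_pm e * cartanA i i) \<noteq> 0"
proof -
  have d: "q - inverse q \<noteq> 0"
  proof
    assume "q - inverse q = 0"
    then have "q * q = 1" using assms(1) by (simp add: field_simps)
    then show False using assms(2) by (simp add: power2_eq_square)
  qed
  have e: "q^2 - inverse (q^2) \<noteq> 0"
  proof
    assume "q^2 - inverse (q^2) = 0"
    then have "q^2 * q^2 = 1" using assms(1) by (simp add: field_simps)
    then have "(q^2 - 1) * (q^2 + 1) = 0" by (simp add: algebra_simps)
    then have "q^2 - 1 = 0 \<or> q^2 + 1 = 0" by simp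
    then have "q^2 = 1 \<or> q^2 = -1" by (simp only: right_minus_eq eq_neg_iff_add_eq_0)
    then show False using assms(2,3) by blast
  qed
  have e2: "inverse (q^2) - q^2 \<noteq> 0" using e by (metis right_minus_eq)
  show ?thesis
    using d e e2 by (simp add: qint_def sgn_pm_def cartanA_def power_int_minus)
qed

theorem mainTheorem5:
  fixes sc :: "complex \<Rightarrow> 'a::ring_1"
    and q :: complex and n :: nat and Q :: "nat \<Rightarrow> complex"
    and Xp Xm J :: "nat \<Rightarrow> nat \<Rightarrow> 'a" and Kp Km :: "nat \<Rightarrow> 'a"
  assumes "q \<noteq> 0" and "q^2 \<noteq> 1" and "q^2 \<noteq> -1" and "n \<ge> 2"
    and "is_calg sc"
    and "usl_rels sc q n Q Xp Xm J Kp Km"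
  shows "\<forall>i\<in>{1..n-1}. \<forall>t.
           {Xp i t, Xm i t, J i t, Kp i, Km i} \<subseteq>
           subalg sc ((\<Union>k\<in>{1..n-1}. {Xp k 0, Xm k 0, J k 1, Kp k, Km k}))"
proof (intro ballI allI)
  fix i t assume i: "i \<in> {1..n-1}"
  define S where "S = (\<Union>k\<in>{1..n-1}. {Xp k 0, Xm k 0, J k 1, Kp k, Km k})"
  define A where "A = subalg sc S"
  note cf = calg_facts[OF assms(5)]
  have KK: "\<forall>i\<in>{1..n-1}. Kp i * Km i = 1 \<and> Km i * Kp i = 1"
    using assms(6) unfolding usl_rels_def Let_def by (elim conjE) assumption
  have RK: "\<forall>i\<in>{1..n-1}. (Km i)^2 = 1 - sc (q - inverse q) * J i 0"
    using assms(6) unfolding usl_rels_def Let_def by (elim conjE) assumption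
  have RJ0: "\<forall>e. \<forall>i\<in>{1..n-1}. \<forall>j\<in>{1..n-1}. \<forall>t.
      sc (q powi (sgn_pm e * cartanA i j)) * J i 0 * Xpm e Xp Xm j t
        - sc (q powi (- sgn_pm e * cartanA i j)) * Xpm e Xp Xm j t * J i 0
      = sc (qint q (sgn_pm e * cartanA i j)) * Xpm e Xp Xm j t"
    using assms(6) unfolding usl_rels_def Let_def by (elim conjE) assumption
  have RJ: "\<forall>e. \<forall>i\<in>{1..n-1}. \<forall>j\<in>{1..n-1}. \<forall>s t.
      J i (s+1) * Xpm e Xp Xm j t - Xpm e Xp Xm j t * J i (s+1)
      = sc (q powi (sgn_pm e * cartanA i j)) * J i s * Xpm e Xp Xm j (t+1)
        - sc (q powi (- sgn_pm e * cartanA i j)) * Xpm e Xp Xm j (t+1) * J i s"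
    using assms(6) unfolding usl_rels_def Let_def by (elim conjE) assumption
  have RX: "\<forall>i\<in>{1..n-1}. \<forall>j\<in>{1..n-1}. \<forall>t s.
      Xp i t * Xm j s - Xm j s * Xp i t
      = (if i = j then Kp i * (J i (s+t) - sc (Q i) * J i (s+t+1)) else 0)"
    using assms(6) unfolding usl_rels_def Let_def by (elim conjE) assumption
  have gS: "Xp i 0 \<in> A" "Xm i 0 \<in> A" "J i 1 \<in> A" "Kp i \<in> A" "Km i \<in> A"
    using i unfolding A_def S_def by (auto intro!: subalg.gen)
  have J0: "J i 0 \<in> A"
  proof -
    have dn: "q - inverse q \<noteq> 0"
    proof
      assume "q - inverse q = 0"
      then have "q * q = 1" using assms(1) by (simp add: field_simps)
      then show False using assms(2) by (simp add: power2_eq_square)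
    qed
    have "J i 0 = sc (inverse (q - inverse q)) * (1 - (Km i)^2)"
      using RK i sc_cancel[OF assms(5) dn, of "J i 0"] by simp
    moreover have "1 - (Km i)^2 \<in> A"
      unfolding A_def using gS sub_one[OF assms(5)]
      by (simp add: A_def power2_eq_square sub_diff[OF assms(5)] subalg.mult)
    ultimately show ?thesis unfolding A_def using sub_smult[OF assms(5)] by simp
  qed
  have Xall: "Xpm e Xp Xm i s \<in> A" for e s
  proof (induction s)
    case 0
    then show ?case using gS unfolding Xpm_def by simp
  next
    case (Suc s)
    let ?c = "sgn_pm e * cartanA i i"
    have "J i 1 * Xpm e Xp Xm i s - Xpm e Xp Xm i s * J i 1 = sc (qint q ?c) * Xpm e Xp Xm i (Suc s)"
      using RJ[rule_format, where e=e and i=i and j=i and s=0 and t=s, OF i i] RJ0[rule_format, where e=e and i=i and j=i and t="Suc s", OF i i] by simp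
    then have "Xpm e Xp Xm i (Suc s) = sc (inverse (qint q ?c)) * (J i 1 * Xpm e Xp Xm i s - Xpm e Xp Xm i s * J i 1)"
      using sc_cancel[OF assms(5) qint_nz[OF assms(1-3)]] by simp
    moreover have "J i 1 * Xpm e Xp Xm i s - Xpm e Xp Xm i s * J i 1 \<in> A"
      using Suc gS unfolding A_def by (simp add: sub_diff[OF assms(5)] subalg.mult)
    ultimately show ?case unfolding A_def using sub_smult[OF assms(5)] by simp
  qed
  have Xp: "Xp i s \<in> A" and Xm: "Xm i s \<in> A" for s
    using Xall[of True s] Xall[of False s] unfolding Xpm_def by simp_all
  have comm: "Km i * (Xp i s * Xm i 0 - Xm i 0 * Xp i s) = J i s - sc (Q i) * J i (s+1)" for s
  proof -
    have "Km i * (Xp i s * Xm i 0 - Xm i 0 * Xp i s) = (Km i * Kp i) * (J i s - sc (Q i) * J i (s+1))"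
      using RX[rule_format, where i=i and j=i and t=s and s=0, OF i i] by (simp add: mult.assoc)
    then show ?thesis using KK i by simp
  qed
  have cA: "Km i * (Xp i s * Xm i 0 - Xm i 0 * Xp i s) \<in> A" for s
    using Xp Xm gS unfolding A_def by (simp add: sub_diff[OF assms(5)] subalg.mult)
  have Jall: "J i s \<in> A" for s
  proof (cases "Q i = 0")
    case True
    then show ?thesis using comm[of s] cA[of s] cf by simp
  next
    case False
    show ?thesis
    proof (induction s)
      case 0 then show ?case using J0 .
    next
      case (Suc s)
      have "J i (Suc s) = sc (inverse (Q i)) * (J i s - Km i * (Xp i s * Xm i 0 - Xm i 0 * Xp i s))"
        using comm[of s] sc_cancel[OF assms(5) False, of "J i (Suc s)"] by simp
      moreover have "J i s - Km i * (Xp i s * Xm i 0 - Xm i 0 * Xp i s) \<in> A"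
        using Suc cA unfolding A_def by (simp add: sub_diff[OF assms(5)])
      ultimately show ?case unfolding A_def using sub_smult[OF assms(5)] by simp
    qed
  qed
  show "{Xp i t, Xm i t, J i t, Kp i, Km i} \<subseteq> subalg sc S"
    using Xp Xm Jall gS unfolding A_def by simp
qed

end
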